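(* Let $(\mathcal{P},\cdot)$ be a finite-dimensional simple admissible Poisson algebra which is not a nilalgebra. Then $\mathcal{P}$ has a unit element $1$ (with $1\cdot x=x\cdot 1=x$ for all $x$).
   Context: $\mathbb{K}$ is a field of characteristic different from $2$ and $3$. Associator: $A(X,Y,Z)=(X\cdot Y)\cdot Z-X\cdot(Y\cdot Z)$. An admissible Poisson algebra is a $\mathbb{K}$-vector space $\mathcal{P}$ with a bilinear product $\cdot$ satisfying $3A(X,Y,Z)=(X\cdot Z)\cdot Y+(Y\cdot Z)\cdot X-(Y\cdot X)\cdot Z-(Z\cdot X)\cdot Y$ for all $X,Y,Z$. $\mathcal{P}$ is simple if it has no two-sided ideals other than $\{0\}$ and $\mathcal{P}$, and $\mathcal{P}\cdot\mathcal{P}\neq\{0\}$. Powers: $X^1=X$, $X^{i+1}=X\cdot X^i$; $\mathcal{P}$ is a nilalgebra if every $X$ satisfies $X^r=0$ for some $r$. *)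

theory Defs
  imports Complex_Main
begin

definition bilinear_product ::
  "('k::field \<Rightarrow> 'v::ab_group_add \<Rightarrow> 'v) \<Rightarrow> ('v \<Rightarrow> 'v \<Rightarrow> 'v) \<Rightarrow> bool" where
  "bilinear_product scale mult \<longleftrightarrow>
     (\<forall>x y z. mult (x + y) z = mult x z + mult y z) \<and>
     (\<forall>x y z. mult x (y + z) = mult x y + mult x z) \<and>
     (\<forall>c x y. mult (scale c x) y = scale c (mult x y)) \<and>
     (\<forall>c x y. mult x (scale c y) = scale c (mult x y))"

definition associator :: "('v::ab_group_add \<Rightarrow> 'v \<Rightarrow> 'v) \<Rightarrow> 'v \<Rightarrow> 'v \<Rightarrow> 'v \<Rightarrow> 'v" where
  "associator mult x y z = mult (mult x y) z - mult x (mult y z)"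

definition admissible_poisson ::
  "('k::field \<Rightarrow> 'v::ab_group_add \<Rightarrow> 'v) \<Rightarrow> ('v \<Rightarrow> 'v \<Rightarrow> 'v) \<Rightarrow> bool" where
  "admissible_poisson scale mult \<longleftrightarrow>
     bilinear_product scale mult \<and>
     (\<forall>x y z. scale 3 (associator mult x y z) =
        mult (mult x z) y + mult (mult y z) x - mult (mult y x) z - mult (mult z x) y)"

definition two_sided_ideal ::
  "('k::field \<Rightarrow> 'v::ab_group_add \<Rightarrow> 'v) \<Rightarrow> ('v \<Rightarrow> 'v \<Rightarrow> 'v) \<Rightarrow> 'v set \<Rightarrow> bool" where
  "two_sided_ideal scale mult I \<longleftrightarrow>
     Modules.module.subspace scale I \<and> (\<forall>x\<in>I. \<forall>y. mult x y \<in> I \<and> mult y x \<in> I)"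

definition simple_algebra ::
  "('k::field \<Rightarrow> 'v::ab_group_add \<Rightarrow> 'v) \<Rightarrow> ('v \<Rightarrow> 'v \<Rightarrow> 'v) \<Rightarrow> bool" where
  "simple_algebra scale mult \<longleftrightarrow>
     (\<forall>I. two_sided_ideal scale mult I \<longrightarrow> I = {0} \<or> I = UNIV) \<and>
     (\<exists>x y. mult x y \<noteq> 0)"

text \<open>Powers: ppow mult X n = X^(n+1), i.e. X^1 = X and X^(i+1) = X * X^i.\<close>
fun ppow :: "('v \<Rightarrow> 'v \<Rightarrow> 'v) \<Rightarrow> 'v \<Rightarrow> nat \<Rightarrow> 'v" where
  "ppow mult X 0 = X"
| "ppow mult X (Suc n) = mult X (ppow mult X n)"

definition nilalgebra :: "('v::zero \<Rightarrow> 'v \<Rightarrow> 'v) \<Rightarrow> bool" where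
  "nilalgebra mult \<longleftrightarrow> (\<forall>X. \<exists>n. ppow mult X n = 0)"

end

theory Submission
  imports Defs
begin


lemma comb_assoc:
  fixes Lxyz Lxzy Lyxz Lyzx Lzxy Lzyx Rxyz Rxzy Ryxz Ryzx Rzxy Rzyx :: "'a::ab_group_add"
  assumes "(Lxyz - Rxyz) + (Lxyz - Rxyz) + (Lxyz - Rxyz) = Lxzy + Lyzx - Lyxz - Lzxy"
    and "(Lxzy - Rxzy) + (Lxzy - Rxzy) + (Lxzy - Rxzy) = Lxyz + Lzyx - Lzxy - Lyxz"
    and "(Lzxy - Rzxy) + (Lzxy - Rzxy) + (Lzxy - Rzxy) = Lzyx + Lxyz - Lxzy - Lyzx"
    and "(Lzyx - Rzyx) + (Lzyx - Rzyx) + (Lzyx - Rzyx) = Lzxy + Lyxz - Lyzx - Lxzy"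
  defines "T \<equiv> Lxyz + Lyxz + Rzxy + Rzyx - Rxyz - Rxzy - Lyzx - Lzyx"
  shows "T + T + T = 0"
proof -
  have "T + T + T
   = ((Lxyz - Rxyz) + (Lxyz - Rxyz) + (Lxyz - Rxyz) - (Lxzy + Lyzx - Lyxz - Lzxy))
   + ((Lxzy - Rxzy) + (Lxzy - Rxzy) + (Lxzy - Rxzy) - (Lxyz + Lzyx - Lzxy - Lyxz))
   - ((Lzxy - Rzxy) + (Lzxy - Rzxy) + (Lzxy - Rzxy) - (Lzyx + Lxyz - Lxzy - Lyzx))
   - ((Lzyx - Rzyx) + (Lzyx - Rzyx) + (Lzyx - Rzyx) - (Lzxy + Lyxz - Lyzx - Lxzy))"
    unfolding T_def by (simp add: algebra_simps)
  also have "\<dots> = 0" using assms(1-4) by simp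
  finally show ?thesis .
qed

lemma comb_leib:
  fixes Lxyz Lxzy Lyxz Lyzx Lzxy Lzyx Rxyz Rxzy Ryxz Ryzx Rzxy Rzyx :: "'a::ab_group_add"
  assumes "(Lxyz - Rxyz) + (Lxyz - Rxyz) + (Lxyz - Rxyz) = Lxzy + Lyzx - Lyxz - Lzxy"
    and "(Lxzy - Rxzy) + (Lxzy - Rxzy) + (Lxzy - Rxzy) = Lxyz + Lzyx - Lzxy - Lyxz"
    and "(Lyxz - Ryxz) + (Lyxz - Ryxz) + (Lyxz - Ryxz) = Lyzx + Lxzy - Lxyz - Lzyx"
    and "(Lyzx - Ryzx) + (Lyzx - Ryzx) + (Lyzx - Ryzx) = Lyxz + Lzxy - Lzyx - Lxyz"
    and "(Lzxy - Rzxy) + (Lzxy - Rzxy) + (Lzxy - Rzxy) = Lzyx + Lxyz - Lxzy - Lyzx"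
    and "(Lzyx - Rzyx) + (Lzyx - Rzyx) + (Lzyx - Rzyx) = Lzxy + Lyxz - Lyzx - Lxzy"
  defines "T \<equiv> Rxyz + Rxzy - Lyzx - Lzyx - (Lxyz - Lyxz + Rzxy - Rzyx) - (Ryxz - Ryzx + Lxzy - Lzxy)"
  shows "T + T + T = 0"
proof -
  have "T + T + T
   = - ((Lxyz - Rxyz) + (Lxyz - Rxyz) + (Lxyz - Rxyz) - (Lxzy + Lyzx - Lyxz - Lzxy))
   - ((Lxzy - Rxzy) + (Lxzy - Rxzy) + (Lxzy - Rxzy) - (Lxyz + Lzyx - Lzxy - Lyxz))
   + ((Lyxz - Ryxz) + (Lyxz - Ryxz) + (Lyxz - Ryxz) - (Lyzx + Lxzy - Lxyz - Lzyx))
   - ((Lyzx - Ryzx) + (Lyzx - Ryzx) + (Lyzx - Ryzx) - (Lyxz + Lzxy - Lzyx - Lxyz))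
   + ((Lzxy - Rzxy) + (Lzxy - Rzxy) + (Lzxy - Rzxy) - (Lzyx + Lxyz - Lxzy - Lyzx))
   - ((Lzyx - Rzyx) + (Lzyx - Rzyx) + (Lzyx - Rzyx) - (Lzxy + Lyxz - Lyzx - Lxzy))"
    unfolding T_def by (simp add: algebra_simps)
  also have "\<dots> = 0" using assms(1-6) by simp
  finally show ?thesis .
qed



locale apa = vector_space scale for scale :: "'k::field \<Rightarrow> 'v::ab_group_add \<Rightarrow> 'v" +
  fixes mult :: "'v \<Rightarrow> 'v \<Rightarrow> 'v"
  assumes adm: "admissible_poisson scale mult"
    and c2: "(2::'k) \<noteq> 0" and c3: "(3::'k) \<noteq> 0"
begin

lemma madd_l: "mult (a + b) c = mult a c + mult b c"
  using adm unfolding admissible_poisson_def bilinear_product_def by blast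
lemma madd_r: "mult c (a + b) = mult c a + mult c b"
  using adm unfolding admissible_poisson_def bilinear_product_def by blast
lemma msc_l: "mult (scale r a) b = scale r (mult a b)"
  using adm unfolding admissible_poisson_def bilinear_product_def by blast
lemma msc_r: "mult a (scale r b) = scale r (mult a b)"
  using adm unfolding admissible_poisson_def bilinear_product_def by blast
lemma m0l[simp]: "mult 0 b = 0"
  using madd_l[of 0 0 b] by simp
lemma m0r[simp]: "mult b 0 = 0"
  using madd_r[of b 0 0] by simp
lemma mminus_l: "mult (- a) b = - mult a b"
proof -
  have "mult a b + mult (-a) b = 0" using madd_l[of a "-a" b] by simp
  then show ?thesis using minus_unique by metis
qed
lemma mminus_r: "mult b (- a) = - mult b a"
proof -
  have "mult b a + mult b (-a) = 0" using madd_r[of b a "-a"] by simp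
  then show ?thesis using minus_unique by metis
qed
lemma mdiff_l: "mult (a - b) c = mult a c - mult b c"
  using madd_l[of a "-b" c] by (simp add: mminus_l)
lemma mdiff_r: "mult c (a - b) = mult c a - mult c b"
  using madd_r[of c a "-b"] by (simp add: mminus_r)

lemma three: "scale 3 v = v + v + v"
proof -
  have e: "(3::'k) = 1 + 1 + 1" by simp
  show ?thesis by (subst e) (simp only: scale_left_distrib scale_one)
qed

lemma H: "(mult (mult x y) z - mult x (mult y z)) + (mult (mult x y) z - mult x (mult y z))
   + (mult (mult x y) z - mult x (mult y z))
   = mult (mult x z) y + mult (mult y z) x - mult (mult y x) z - mult (mult z x) y"
  using adm unfolding admissible_poisson_def associator_def three by blast

lemma triple0: fixes v :: 'v shows "v + v + v = 0 \<Longrightarrow> v = 0"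
proof -
  assume "v + v + v = 0"
  then have "scale 3 v = 0" by (simp add: three)
  then have "(3::'k) = 0 \<or> v = 0" by simp
  with c3 show "v = 0" by blast
qed

definition s where "s a b = mult a b + mult b a"
definition c where "c a b = mult a b - mult b a"

lemma s_assoc: "s (s x y) z = s x (s y z)"
proof -
  have "(mult (mult x y) z + mult (mult y x) z + mult z (mult x y) + mult z (mult y x)
     - mult x (mult y z) - mult x (mult z y) - mult (mult y z) x - mult (mult z y) x)
   + (mult (mult x y) z + mult (mult y x) z + mult z (mult x y) + mult z (mult y x)
     - mult x (mult y z) - mult x (mult z y) - mult (mult y z) x - mult (mult z y) x)
   + (mult (mult x y) z + mult (mult y x) z + mult z (mult x y) + mult z (mult y x)
     - mult x (mult y z) - mult x (mult z y) - mult (mult y z) x - mult (mult z y) x) = 0"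
    by (rule comb_assoc[OF H[of x y z] H[of x z y] H[of z x y] H[of z y x]])
  then have "mult (mult x y) z + mult (mult y x) z + mult z (mult x y) + mult z (mult y x)
     - mult x (mult y z) - mult x (mult z y) - mult (mult y z) x - mult (mult z y) x = 0"
    by (rule triple0)
  moreover have "s (s x y) z - s x (s y z) = mult (mult x y) z + mult (mult y x) z + mult z (mult x y) + mult z (mult y x)
     - mult x (mult y z) - mult x (mult z y) - mult (mult y z) x - mult (mult z y) x"
    unfolding s_def madd_l madd_r by (simp only: diff_conv_add_uminus minus_add_distrib minus_minus add_ac)
  ultimately show ?thesis by simp
qed

lemma leib: "c x (s y z) = s (c x y) z + s y (c x z)"
proof -
  define T where "T = mult x (mult y z) + mult x (mult z y) - mult (mult y z) x - mult (mult z y) x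
     - (mult (mult x y) z - mult (mult y x) z + mult z (mult x y) - mult z (mult y x))
     - (mult y (mult x z) - mult y (mult z x) + mult (mult x z) y - mult (mult z x) y)"
  have "T + T + T = 0" unfolding T_def
    by (rule comb_leib[OF H[of x y z] H[of x z y] H[of y x z] H[of y z x] H[of z x y] H[of z y x]])
  then have "T = 0" by (rule triple0)
  moreover have "c x (s y z) - (s (c x y) z + s y (c x z)) = T"
    unfolding s_def c_def T_def madd_l madd_r mdiff_l mdiff_r by (simp only: diff_conv_add_uminus minus_add_distrib minus_minus add_ac)
  ultimately show ?thesis by simp
qed

lemma s_comm: "s a b = s b a" unfolding s_def by (simp add: add.commute)
lemma c_anti: "c a b = - c b a" unfolding c_def by simp
lemma c_self[simp]: "c a a = 0" unfolding c_def by simp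
lemma s_add_l: "s (a + b) d = s a d + s b d" unfolding s_def by (simp add: madd_l madd_r algebra_simps)
lemma s_add_r: "s d (a + b) = s d a + s d b" unfolding s_def by (simp add: madd_l madd_r algebra_simps)
lemma c_add_l: "c (a + b) d = c a d + c b d" unfolding c_def by (simp add: madd_l madd_r algebra_simps)
lemma c_add_r: "c d (a + b) = c d a + c d b" unfolding c_def by (simp add: madd_l madd_r algebra_simps)
lemma s_sc_l: "s (scale r a) b = scale r (s a b)" unfolding s_def by (simp add: msc_l msc_r scale_right_distrib)
lemma s_sc_r: "s b (scale r a) = scale r (s b a)" unfolding s_def by (simp add: msc_l msc_r scale_right_distrib)
lemma c_sc_l: "c (scale r a) b = scale r (c a b)" unfolding c_def by (simp add: msc_l msc_r scale_right_diff_distrib)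
lemma c_sc_r: "c b (scale r a) = scale r (c b a)" unfolding c_def by (simp add: msc_l msc_r scale_right_diff_distrib)
lemma s0[simp]: "s 0 a = 0" "s a 0 = 0" unfolding s_def by simp_all
lemma c0[simp]: "c 0 a = 0" "c a 0 = 0" unfolding c_def by simp_all
lemma s_minus_r: "s a (- b) = - s a b" unfolding s_def by (simp add: mminus_l mminus_r)

lemma half: "scale (1/2) (v + v) = v"
proof -
  have "v + v = scale 2 v" using scale_left_distrib[of 1 1 v] by simp
  then show ?thesis using c2 by simp
qed

lemma mult_sc: "mult a b = scale (1/2) (s a b + c a b)"
proof -
  have "s a b + c a b = mult a b + mult a b" unfolding s_def c_def by (simp add: algebra_simps)
  then show ?thesis by (simp add: half)
qed


definition pw where "pw x n = ((s x) ^^ n) x"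

lemma pw_Suc: "pw x (Suc n) = s x (pw x n)" by (simp add: pw_def)
lemma pw_0: "pw x 0 = x" by (simp add: pw_def)

lemma c_pw: "c x (pw x n) = 0"
proof (induction n)
  case 0 then show ?case by (simp add: pw_0)
next
  case (Suc n) then show ?case by (simp add: pw_Suc leib)
qed

lemma ppow_pw: "ppow mult x n = scale ((1/2)^n) (pw x n)"
proof (induction n)
  case 0 then show ?case by (simp add: pw_0)
next
  case (Suc n)
  have "ppow mult x (Suc n) = scale ((1/2)^n) (mult x (pw x n))" by (simp add: Suc msc_r)
  also have "mult x (pw x n) = scale (1/2) (pw x (Suc n))"
    by (simp add: mult_sc c_pw pw_Suc)
  finally show ?case by (simp add: mult.commute)
qed

lemma funpow_s: "((s x) ^^ Suc k) z = s (pw x k) z"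
proof (induction k)
  case 0 then show ?case by (simp add: pw_0)
next
  case (Suc k)
  have "((s x) ^^ Suc (Suc k)) z = s x (((s x) ^^ Suc k) z)" by simp
  also have "\<dots> = s x (s (pw x k) z)" by (simp only: Suc)
  also have "\<dots> = s (pw x (Suc k)) z" by (simp add: pw_Suc s_assoc)
  finally show ?case .
qed

lemma pw_add: "pw x (Suc (i + j)) = s (pw x i) (pw x j)"
proof -
  have "pw x (Suc i + j) = ((s x) ^^ Suc i) (((s x) ^^ j) x)"
    unfolding pw_def by (simp only: funpow_add comp_apply)
  then show ?thesis by (simp add: funpow_s pw_def del: funpow.simps)
qed

lemma iter_add: "((s x) ^^ k) (a + b) = ((s x) ^^ k) a + ((s x) ^^ k) b"
  by (induction k) (simp_all add: s_add_r)
lemma iter_sc: "((s x) ^^ k) (scale r a) = scale r (((s x) ^^ k) a)"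
  by (induction k) (simp_all add: s_sc_r)
lemma iter_0: "((s x) ^^ k) 0 = 0"
  by (induction k) simp_all

lemma subspace_range: "subspace (range ((s x) ^^ k))"
  unfolding subspace_def
proof (intro conjI ballI allI)
  show "0 \<in> range ((s x) ^^ k)" using iter_0[where x=x and k=k] by (metis rangeI)
next
  fix a b assume "a \<in> range ((s x) ^^ k)" "b \<in> range ((s x) ^^ k)"
  then obtain a' b' where "a = ((s x) ^^ k) a'" "b = ((s x) ^^ k) b'" by auto
  then show "a + b \<in> range ((s x) ^^ k)" using iter_add[where x=x and k=k and a=a' and b=b'] by (metis rangeI)
next
  fix r a assume "a \<in> range ((s x) ^^ k)"
  then obtain a' where "a = ((s x) ^^ k) a'" by auto
  then show "scale r a \<in> range ((s x) ^^ k)" using iter_sc[where x=x and k=k and r=r and a=a'] by (metis rangeI)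
qed

lemma idem_exists:
  assumes fin: "\<exists>B. finite B \<and> span B = UNIV" and nz: "\<forall>n. pw x n \<noteq> 0"
  shows "\<exists>u. u \<noteq> 0 \<and> s u u = u"
proof -
  obtain B where B: "finite B" "span B = UNIV" using fin by blast
  obtain A where A: "A \<subseteq> B" "independent A" "B \<subseteq> span A"
    using maximal_independent_subset[of B] by blast
  have finA: "finite A" using A(1) B(1) finite_subset by blast
  have spA: "span A = UNIV"
  proof -
    have "span B \<subseteq> span A" using span_minimal[OF A(3)] by simp
    then show ?thesis using B(2) by auto
  qed
  interpret fd: finite_dimensional_vector_space scale A
    by (intro finite_dimensional_vector_space.intro vector_space_axioms
        finite_dimensional_vector_space_axioms.intro finA A(2) spA)
  define R where "R k = range ((s x) ^^ k)" for k
  have subR: "subspace (R k)" for k unfolding R_def by (rule subspace_range)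
  define d where "d = (LEAST d. \<exists>k. dim (R k) = d)"
  have "\<exists>k. dim (R k) = d" unfolding d_def by (rule LeastI_ex) blast
  then obtain k where k: "dim (R k) = d" by blast
  have dle: "d \<le> dim (R m)" for m unfolding d_def by (rule Least_le) blast
  have sub: "R (Suc k) \<subseteq> R k"
  proof
    fix y assume "y \<in> R (Suc k)"
    then obtain z where "y = ((s x) ^^ Suc k) z" unfolding R_def by auto
    then have "y = ((s x) ^^ k) (s x z)" by (simp only: funpow_Suc_right comp_apply)
    then show "y \<in> R k" unfolding R_def by auto
  qed
  have eqk: "R (Suc k) = R k"
    using fd.subspace_dim_equal[OF subR subR sub] dle[of "Suc k"] k by simp
  have RS: "R (Suc m) = s x ` R m" for m
    unfolding R_def by (simp add: image_comp)
  have stab: "m \<ge> k \<Longrightarrow> R m = R k" for m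
  proof (induction m rule: dec_induct)
    case base then show ?case by simp
  next
    case (step m)
    have "R (Suc m) = s x ` R m" by (rule RS)
    also have "\<dots> = s x ` R k" by (simp only: step.IH)
    also have "\<dots> = R (Suc k)" by (rule RS[symmetric])
    also have "\<dots> = R k" by (rule eqk)
    finally show ?case .
  qed
  define a where "a = pw x k"
  have "a \<in> R k" unfolding a_def R_def pw_def by simp
  then have "a \<in> R (Suc (Suc (k + k)))" using stab[of "Suc (Suc (k + k))"] by simp
  then obtain z where "a = ((s x) ^^ Suc (Suc (k + k))) z" unfolding R_def by auto
  then have az: "a = s (s a a) z" by (simp only: funpow_s pw_add a_def)
  define u where "u = s a z"
  have e1: "s (s a z) a = s (s a a) z"
  proof -
    have "s (s a z) a = s a (s z a)" by (rule s_assoc)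
    also have "\<dots> = s a (s a z)" by (simp only: s_comm[of z a])
    also have "\<dots> = s (s a a) z" by (rule s_assoc[symmetric])
    finally show ?thesis .
  qed
  have "s u u = s (s (s a z) a) z" unfolding u_def by (rule s_assoc[symmetric])
  also have "\<dots> = s (s (s a a) z) z" by (simp only: e1)
  also have "\<dots> = s a z" by (simp only: az[symmetric])
  finally have uu: "s u u = u" unfolding u_def .
  have "s a u = s (s a a) z" unfolding u_def by (rule s_assoc[symmetric])
  then have "s a u = a" by (simp only: az[symmetric])
  moreover have "a \<noteq> 0" unfolding a_def using nz by blast
  ultimately have "u \<noteq> 0" by auto
  with uu show ?thesis by blast
qed

lemma unit_from_idem:
  assumes simple: "simple_algebra scale mult" and u0: "u \<noteq> 0" and uu: "s u u = u"
  shows "\<exists>e. \<forall>y. mult e y = y \<and> mult y e = y"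
proof -
  have cu: "c w u = 0" for w
  proof -
    define d where "d = c w u"
    have "d = c w (s u u)" unfolding d_def by (simp only: uu)
    also have "\<dots> = s (c w u) u + s u (c w u)" by (rule leib)
    also have "\<dots> = s u d + s u d" unfolding d_def by (simp only: s_comm[of "c w u" u])
    finally have d1: "d = s u d + s u d" .
    have "s u d = s u (s u d + s u d)" by (subst (1) d1) (rule refl)
    also have "\<dots> = s u (s u d) + s u (s u d)" by (rule s_add_r)
    also have "s u (s u d) = s (s u u) d" by (rule s_assoc[symmetric])
    also have "\<dots> = s u d" by (simp only: uu)
    finally have "s u d = s u d + s u d" .
    then have "s u d = 0" by simp
    then have "d = 0" using d1 by simp
    then show ?thesis unfolding d_def .
  qed
  define I where "I = {y. s u y = y}"
  have cI: "c w y \<in> I" if "y \<in> I" for w y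
  proof -
    have yy: "s u y = y" using that unfolding I_def by simp
    have "c w y = c w (s u y)" by (simp only: yy)
    also have "\<dots> = s (c w u) y + s u (c w y)" by (rule leib)
    also have "\<dots> = s u (c w y)" by (simp only: cu s0 add_0_left)
    finally show ?thesis unfolding I_def by simp
  qed
  have sI: "s y w \<in> I" if "y \<in> I" for w y
  proof -
    have yy: "s u y = y" using that unfolding I_def by simp
    have "s u (s y w) = s (s u y) w" by (rule s_assoc[symmetric])
    also have "\<dots> = s y w" by (simp only: yy)
    finally show ?thesis unfolding I_def by simp
  qed
  have subI: "subspace I"
    unfolding subspace_def I_def by (simp add: s_add_r s_sc_r)
  have ideal: "two_sided_ideal scale mult I"
    unfolding two_sided_ideal_def
  proof (intro conjI ballI allI)
    show "subspace I" by (rule subI)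
  next
    fix y w assume y: "y \<in> I"
    have "- c w y \<in> I" using cI[OF y, of w] subspace_neg[OF subI] by blast
    then have cyw: "c y w \<in> I" by (simp only: c_anti[of y w])
    have "s y w + c y w \<in> I" using sI[OF y, of w] cyw subspace_add[OF subI] by blast
    then show "mult y w \<in> I" unfolding mult_sc[of y w] using subspace_scale[OF subI] by blast
    have "s y w + c w y \<in> I" using sI[OF y, of w] cI[OF y, of w] subspace_add[OF subI] by blast
    then have "s w y + c w y \<in> I" by (simp only: s_comm[of w y])
    then show "mult w y \<in> I" unfolding mult_sc[of w y] using subspace_scale[OF subI] by blast
  qed
  have "u \<in> I" unfolding I_def using uu by simp
  then have "I = UNIV" using simple ideal u0 unfolding simple_algebra_def by blast
  then have su: "s u y = y" for y unfolding I_def by blast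
  have cu': "c u y = 0" for y
  proof -
    have "c u y = - c y u" by (rule c_anti)
    then show ?thesis by (simp only: cu neg_0_equal_iff_equal minus_zero)
  qed
  define e where "e = u + u"
  have "mult e y = y \<and> mult y e = y" for y
  proof
    have "s e y + c e y = y + y" unfolding e_def
      by (simp only: s_add_l c_add_l su cu' add_0_left add_0_right)
    then show "mult e y = y" unfolding mult_sc[of e y] by (simp only: half)
    have "s y e + c y e = y + y" unfolding e_def
      by (simp only: s_add_r c_add_r s_comm[of y u] su cu add_0_left add_0_right)
    then show "mult y e = y" unfolding mult_sc[of y e] by (simp only: half)
  qed
  then show ?thesis by blast
qed

end

theorem mainTheorem11:
  fixes scale :: "'k::field \<Rightarrow> 'v::ab_group_add \<Rightarrow> 'v"
    and mult :: "'v \<Rightarrow> 'v \<Rightarrow> 'v"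
  assumes char2: "(2::'k) \<noteq> 0" and char3: "(3::'k) \<noteq> 0"
    and vs: "vector_space scale"
    and fin: "\<exists>B. finite B \<and> Modules.module.span scale B = UNIV"
    and adm: "admissible_poisson scale mult"
    and simple: "simple_algebra scale mult"
    and notnil: "\<not> nilalgebra mult"
  shows "\<exists>e. \<forall>x. mult e x = x \<and> mult x e = x"
proof -
  interpret apa scale mult
    by (rule apa.intro[OF vs]) (simp add: apa_axioms_def adm char2 char3)
  obtain x where x: "\<forall>n. ppow mult x n \<noteq> 0" using notnil unfolding nilalgebra_def by blast
  have "\<forall>n. pw x n \<noteq> 0"
  proof
    fix n show "pw x n \<noteq> 0" using x[rule_format, of n] ppow_pw[of x n] by auto
  qed
  then obtain u where "u \<noteq> 0" "s u u = u" using idem_exists fin by blast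
  then show ?thesis using unit_from_idem simple by blast
qed

end
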